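(* For every graph $G$ with at least one vertex, $$\chi'_{\rm ocf}(G)\le\chi'_{\rm cf}(G)\le 3\lceil\log_2\chi(G)\rceil+17<3\log_2\chi(G)+20.$$
   Context: For an edge $e=uv$ of $G=(V,E)$, $E[e]$ is the set of edges incident with $u$ or $v$, $E(e)=E[e]\setminus\{e\}$; $e$ is isolated if $E(e)=\emptyset$. For an edge colouring $c$, a colour $\alpha$ is unique for $e$ if $\alpha$ appears on some edge $e'\in E(e)$ and on no other edge of $E[e]\setminus\{e'\}$; $e$ is satisfied if such a colour exists. A colouring of all edges is conflict-free if every non-isolated edge is satisfied; $\chi'_{\rm cf}(G)$ is the minimum number of colours in such a colouring. $\chi'_{\rm ocf}(G)$ is the minimum number of colours in an edge colouring such that for every edge $e$ with $E(e)\neq\emptyset$ some colour is assigned to exactly one edge of $E(e)$. $\chi(G)$ is the chromatic number. *)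

theory Defs
  imports Complex_Main
begin

definition graph :: "'a set \<Rightarrow> 'a set set \<Rightarrow> bool" where
  "graph V E \<longleftrightarrow> finite V \<and> (\<forall>e\<in>E. \<exists>u v. u \<noteq> v \<and> u \<in> V \<and> v \<in> V \<and> e = {u, v})"

definition closed_edge_nbhd :: "'a set set \<Rightarrow> 'a set \<Rightarrow> 'a set set" where
  "closed_edge_nbhd E e = {f \<in> E. f \<inter> e \<noteq> {}}"

definition open_edge_nbhd :: "'a set set \<Rightarrow> 'a set \<Rightarrow> 'a set set" where
  "open_edge_nbhd E e = closed_edge_nbhd E e - {e}"

definition isolated_edge :: "'a set set \<Rightarrow> 'a set \<Rightarrow> bool" where
  "isolated_edge E e \<longleftrightarrow> open_edge_nbhd E e = {}"

definition satisfied :: "'a set set \<Rightarrow> ('a set \<Rightarrow> nat) \<Rightarrow> 'a set \<Rightarrow> bool" where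
  "satisfied E c e \<longleftrightarrow> (\<exists>e'\<in>open_edge_nbhd E e.
      \<forall>e''\<in>closed_edge_nbhd E e - {e'}. c e'' \<noteq> c e')"

definition conflict_free :: "'a set set \<Rightarrow> ('a set \<Rightarrow> nat) \<Rightarrow> bool" where
  "conflict_free E c \<longleftrightarrow> (\<forall>e\<in>E. \<not> isolated_edge E e \<longrightarrow> satisfied E c e)"

definition open_conflict_free :: "'a set set \<Rightarrow> ('a set \<Rightarrow> nat) \<Rightarrow> bool" where
  "open_conflict_free E c \<longleftrightarrow> (\<forall>e\<in>E. open_edge_nbhd E e \<noteq> {} \<longrightarrow>
      (\<exists>e'\<in>open_edge_nbhd E e. \<forall>e''\<in>open_edge_nbhd E e - {e'}. c e'' \<noteq> c e'))"

definition chi_cf :: "'a set set \<Rightarrow> nat" where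
  "chi_cf E = (LEAST k. \<exists>c. (\<forall>e\<in>E. c e < k) \<and> conflict_free E c)"

definition chi_ocf :: "'a set set \<Rightarrow> nat" where
  "chi_ocf E = (LEAST k. \<exists>c. (\<forall>e\<in>E. c e < k) \<and> open_conflict_free E c)"

definition chromatic_number :: "'a set \<Rightarrow> 'a set set \<Rightarrow> nat" where
  "chromatic_number V E = (LEAST k. \<exists>f. (\<forall>v\<in>V. f v < k) \<and>
      (\<forall>u v. {u, v} \<in> E \<longrightarrow> f u \<noteq> f v))"

end

theory Submission
  imports Defs
begin

lemma bit_ge_pow: "bit (n::nat) i \<Longrightarrow> 2^i \<le> n"
proof (rule ccontr)
  assume b: "bit n i" and "\<not> 2^i \<le> n"
  then have "n div 2^i = 0" by simp
  with b show False by (simp add: bit_iff_odd)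
qed

lemma bit_lt_M: "(n::nat) < 2^M \<Longrightarrow> bit n i \<Longrightarrow> i < M"
  using bit_ge_pow[of n i] by (meson le_less_trans nat_power_less_imp_less zero_less_numeral)

lemma lt_pow_self: "(j::nat) < 2^j"
  by (rule less_exp)

lemma not_bit_self: "\<not> bit (j::nat) j"
  using bit_ge_pow[of j j] lt_pow_self[of j] by linarith

lemma bit_diff: "(a::nat) \<noteq> b \<Longrightarrow> \<exists>i. bit a i \<noteq> bit b i"
  using bit_eq_iff by blast

lemma bit_j_plus: "bit ((j::nat) + 2^j) i = (bit j i \<or> i = j)"
proof -
  have "set_bit j j = j + 2^j" using set_bit_eq[of j j] not_bit_self[of j] by simp
  moreover have "bit (set_bit j j) i = (bit j i \<or> i = j)"
    by (auto simp: bit_set_bit_iff possible_bit_def)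
  ultimately show ?thesis by simp
qed

lemma odd_ne1_bit: "odd (n::nat) \<Longrightarrow> n \<noteq> 1 \<Longrightarrow> \<exists>i. 1 \<le> i \<and> bit n i"
proof -
  assume o: "odd n" and n1: "n \<noteq> 1"
  have "n \<noteq> 0" using odd_pos[OF o] by simp
  then have "2 \<le> n" using n1 by linarith
  then have "n div 2 \<noteq> 0" by simp
  then obtain i where "bit (n div 2) i" using bit_diff[of "n div 2" 0] by auto
  then have "bit n (Suc i)" by (simp add: bit_Suc)
  then show ?thesis by (intro exI[of _ "Suc i"]) simp
qed

lemma graph_edge: "graph V E \<Longrightarrow> e \<in> E \<Longrightarrow> \<exists>u v. u \<noteq> v \<and> u \<in> V \<and> v \<in> V \<and> e = {u, v}"
  unfolding graph_def by blast

lemma graph_edge2: "graph V E \<Longrightarrow> {u, v} \<in> E \<Longrightarrow> u \<noteq> v \<and> u \<in> V \<and> v \<in> V"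
proof -
  assume g: "graph V E" and e: "{u, v} \<in> E"
  then obtain a b where "a \<noteq> b" "a \<in> V" "b \<in> V" "{u, v} = {a, b}" using graph_edge by blast
  then show ?thesis by (auto simp: doubleton_eq_iff)
qed

lemma grundy_exists:
  assumes g: "graph V E" and ne: "V \<noteq> {}"
  shows "\<exists>f. (\<forall>v\<in>V. f v < chromatic_number V E) \<and> (\<forall>u v. {u, v} \<in> E \<longrightarrow> f u \<noteq> f v)
            \<and> (\<forall>v\<in>V. \<forall>h < f v. \<exists>w. {v, w} \<in> E \<and> f w = h)"
proof -
  have fin: "finite V" using g by (simp add: graph_def)
  obtain h0 where h0: "bij_betw h0 V {0..<card V}" using ex_bij_betw_finite_nat[OF fin] by blast
  have "\<exists>f. (\<forall>v\<in>V. f v < card V) \<and> (\<forall>u v. {u, v} \<in> E \<longrightarrow> f u \<noteq> f v)"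
  proof (intro exI[of _ h0] conjI allI impI ballI)
    fix v assume "v \<in> V" then show "h0 v < card V" using h0 by (auto simp: bij_betw_def)
  next
    fix u v assume "{u, v} \<in> E"
    then have "u \<noteq> v" "u \<in> V" "v \<in> V" using graph_edge2[OF g] by auto
    then show "h0 u \<noteq> h0 v" using h0 by (auto simp: bij_betw_def inj_on_def)
  qed
  then have ex: "\<exists>(k::nat) f. (\<forall>v\<in>V. f v < k) \<and> (\<forall>u v. {u, v} \<in> E \<longrightarrow> f u \<noteq> f v)" by (rule exI[where x="card V"])
  have "\<exists>f. (\<forall>v\<in>V. f v < chromatic_number V E) \<and> (\<forall>u v. {u, v} \<in> E \<longrightarrow> f u \<noteq> f v)"
    unfolding chromatic_number_def by (rule LeastI_ex[OF ex])
  then obtain f0 where f0: "(\<forall>v\<in>V. f0 v < chromatic_number V E) \<and> (\<forall>u v. {u, v} \<in> E \<longrightarrow> f0 u \<noteq> f0 v)"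
    by blast
  define P where "P = (\<lambda>f. (\<forall>v\<in>V. f v < chromatic_number V E) \<and> (\<forall>u v. {u, v} \<in> E \<longrightarrow> f u \<noteq> f v))"
  define m where "m = (\<lambda>f::'a \<Rightarrow> nat. \<Sum>v\<in>V. f v)"
  define f where "f = arg_min m P"
  have Pf: "P f" and minf: "\<And>y. P y \<Longrightarrow> m f \<le> m y"
    using arg_min_nat_lemma[of P f0 m] f0 unfolding f_def P_def by auto
  have gr: "\<forall>v\<in>V. \<forall>h < f v. \<exists>w. {v, w} \<in> E \<and> f w = h"
  proof (intro ballI allI impI, rule ccontr)
    fix v h assume vV: "v \<in> V" and hlt: "h < f v" and no: "\<not> (\<exists>w. {v, w} \<in> E \<and> f w = h)"
    define f' where "f' = f(v := h)"
    have "P f'"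
      unfolding P_def
    proof (intro conjI ballI allI impI)
      fix x assume "x \<in> V"
      then show "f' x < chromatic_number V E" using Pf hlt vV unfolding P_def f'_def by fastforce
    next
      fix a b assume ab: "{a, b} \<in> E"
      have fab: "f a \<noteq> f b" using Pf ab unfolding P_def by blast
      have ne: "a \<noteq> b" using graph_edge2[OF g ab] by simp
      have ba: "{b, a} \<in> E" using ab by (simp add: insert_commute)
      show "f' a \<noteq> f' b"
      proof (cases "a = v")
        case True
        then show ?thesis using ne no ab unfolding f'_def by auto
      next
        case False
        then show ?thesis
          using fab no ba unfolding f'_def by (cases "b = v") auto
      qed
    qed
    then have le: "m f \<le> m f'" by (rule minf)
    have "m f' = m f - f v + h"
    proof -
      have "m f = f v + (\<Sum>x\<in>V - {v}. f x)" unfolding m_def using fin vV by (simp add: sum.remove)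
      moreover have "m f' = h + (\<Sum>x\<in>V - {v}. f x)" unfolding m_def f'_def using fin vV
        by (simp add: sum.remove)
      ultimately show ?thesis by simp
    qed
    moreover have "f v \<le> m f" unfolding m_def using fin vV by (simp add: member_le_sum)
    ultimately show False using le hlt by linarith
  qed
  show ?thesis using Pf gr unfolding P_def by blast
qed

datatype fam = FA nat | FB nat

locale CFC =
  fixes V :: "'a set" and E :: "'a set set" and f :: "'a \<Rightarrow> nat" and K M :: nat
  assumes G: "graph V E"
    and propc: "\<And>u v. {u, v} \<in> E \<Longrightarrow> f u \<noteq> f v"
    and bnd: "\<And>v. v \<in> V \<Longrightarrow> f v < K"
    and grundy: "\<And>v h. v \<in> V \<Longrightarrow> h < f v \<Longrightarrow> \<exists>w. {v, w} \<in> E \<and> f w = h"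
    and KM: "K \<le> 2^M"
begin

lemma edgeE: "e \<in> E \<Longrightarrow> \<exists>u v. u \<noteq> v \<and> u \<in> V \<and> v \<in> V \<and> e = {u, v}"
  using graph_edge[OF G] by blast

lemma edge2: "{u, v} \<in> E \<Longrightarrow> u \<noteq> v \<and> u \<in> V \<and> v \<in> V"
  using graph_edge2[OF G] by blast

definition bB :: "nat \<Rightarrow> nat" where "bB j = (if j = 0 then 2 else j + 1 + 2^j)"
definition rhoA :: "nat \<Rightarrow> nat" where "rhoA j = (if j = 0 then 0 else j + 1)"

fun inP :: "fam \<Rightarrow> nat \<Rightarrow> bool" where
  "inP (FA j) g = (j < M \<and> 2 \<le> g \<and> bit (g - 1) j)"
| "inP (FB j) g = (j < M \<and> g = bB j)"

fun rho :: "fam \<Rightarrow> nat" where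
  "rho (FA j) = rhoA j"
| "rho (FB j) = 1"

definition pos :: "fam \<Rightarrow> 'a \<Rightarrow> bool" where "pos t x = (x \<in> V \<and> inP t (f x))"
definition anch :: "fam \<Rightarrow> 'a \<Rightarrow> 'a" where "anch t x = (SOME y. {x, y} \<in> E \<and> f y = rho t)"
definition desig :: "fam \<Rightarrow> 'a \<Rightarrow> 'a" where "desig t v = (SOME x. pos t x \<and> anch t x = v)"

fun colA :: "fam \<Rightarrow> 'a \<Rightarrow> nat" where
  "colA (FA j) x = (if j = 0 \<and> x = desig (FA j) (anch (FA j) x) then 7 else 8 + j)"
| "colA (FB j) x = (if x = desig (FB j) (anch (FB j) x) then 8 + M + 2 * j else 9 + M + 2 * j)"

definition isAnc :: "'a set \<Rightarrow> bool" where "isAnc e = (\<exists>t x. pos t x \<and> e = {x, anch t x})"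

lemma bB_ge: "2 \<le> bB j"
  unfolding bB_def by auto

lemma bB_inj: "bB j = bB j' \<Longrightarrow> j = j'"
proof (rule ccontr)
  assume eq: "bB j = bB j'" and ne: "j \<noteq> j'"
  have mono: "a < b \<Longrightarrow> bB a < bB b" for a b
  proof -
    assume ab: "a < b"
    have p: "(2::nat) ^ a < 2 ^ b" using ab by simp
    have two: "2 \<le> (2::nat)^b" using ab by (cases b) auto
    have q: "a + 2^a < b + (2::nat)^b" using ab p by linarith
    show "bB a < bB b"
    proof (cases "a = 0")
      case True then show ?thesis using ab two unfolding bB_def by simp
    next
      case False then show ?thesis using ab q unfolding bB_def by simp
    qed
  qed
  show False using ne eq mono[of j j'] mono[of j' j] by linarith
qed

lemma inP_ge2: "inP t g \<Longrightarrow> 2 \<le> g"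
  by (cases t) (auto simp: bB_ge)

lemma rho_lt: "inP t g \<Longrightarrow> rho t < g"
proof (cases t)
  case (FA j)
  assume "inP t g"
  then have g2: "2 \<le> g" and b: "bit (g - 1) j" using FA by auto
  show ?thesis
  proof (cases "j = 0")
    case True then show ?thesis using FA g2 by (simp add: rhoA_def)
  next
    case False
    have "2^j \<le> g - 1" using bit_ge_pow[OF b] .
    moreover have "j < 2^j" by (rule lt_pow_self)
    ultimately have "j + 1 < g" using g2 by linarith
    then show ?thesis using FA False by (simp add: rhoA_def)
  qed
next
  case (FB j)
  assume "inP t g"
  then show ?thesis using FB bB_ge[of j] by auto
qed

lemma rho_notP: "inP t g \<Longrightarrow> \<not> inP t (rho t)"
proof (cases t)
  case (FA j)
  then show ?thesis using not_bit_self[of j] by (auto simp: rhoA_def)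
next
  case (FB j)
  then show ?thesis using bB_ge[of j] by auto
qed

lemma rho_le1: "rho t \<le> 1 \<Longrightarrow> t = FA 0 \<or> (\<exists>j. t = FB j)"
  by (cases t) (auto simp: rhoA_def split: if_splits)

lemma fam_inj: "inP t g \<Longrightarrow> inP t' g \<Longrightarrow> rho t = rho t' \<Longrightarrow> t = t'"
proof (cases t; cases t')
  fix j j' assume "t = FA j" "t' = FA j'" "rho t = rho t'"
  then show "t = t'" by (auto simp: rhoA_def split: if_splits)
next
  fix j j' assume "t = FA j" "t' = FB j'" "rho t = rho t'"
  then show "t = t'" by (auto simp: rhoA_def split: if_splits)
next
  fix j j' assume "t = FB j" "t' = FA j'" "rho t = rho t'"
  then show "t = t'" by (auto simp: rhoA_def split: if_splits)
next
  fix j j' assume "t = FB j" "t' = FB j'" "inP t g" "inP t' g"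
  then show "t = t'" using bB_inj by auto
qed

lemma anch_prop: "pos t x \<Longrightarrow> {x, anch t x} \<in> E \<and> f (anch t x) = rho t"
proof -
  assume p: "pos t x"
  then have "x \<in> V" "rho t < f x" using rho_lt unfolding pos_def by auto
  then have "\<exists>y. {x, y} \<in> E \<and> f y = rho t" using grundy by blast
  then show ?thesis unfolding anch_def by (rule someI_ex)
qed

lemma anch_lt: "pos t x \<Longrightarrow> f (anch t x) < f x"
  using anch_prop rho_lt unfolding pos_def by auto

lemma anc_unique:
  assumes p: "pos t x" and p': "pos t' x'" and eq: "{x, anch t x} = {x', anch t' x'}"
  shows "t = t' \<and> x = x'"
proof (cases "x = x'")
  case True
  have lt: "f (anch t x) < f x" "f (anch t' x') < f x'" using anch_lt p p' by auto
  then have "anch t x \<noteq> x" "anch t' x' \<noteq> x'" by auto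
  then have "anch t x = anch t' x'" using eq True by (auto simp: doubleton_eq_iff)
  then have "rho t = rho t'" using anch_prop[OF p] anch_prop[OF p'] by simp
  then show ?thesis using fam_inj p p' True unfolding pos_def by blast
next
  case False
  then have "x = anch t' x'" "x' = anch t x" using eq by (auto simp: doubleton_eq_iff)
  then show ?thesis using anch_lt[OF p] anch_lt[OF p'] by simp
qed

lemma colA_range: "pos t x \<Longrightarrow> 7 \<le> colA t x \<and> colA t x < 8 + 3 * M"
  by (cases t) (auto simp: pos_def)

lemma colA_fam: "pos t x \<Longrightarrow> pos t' x' \<Longrightarrow> colA t x = colA t' x' \<Longrightarrow> t = t'"
proof (cases t; cases t')
  fix j j' assume "t = FA j" "t' = FA j'" "colA t x = colA t' x'"
  then show "t = t'" by (auto split: if_splits)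
next
  fix j j' assume "t = FA j" "t' = FB j'" "colA t x = colA t' x'" "pos t x"
  then show "t = t'" by (auto simp: pos_def split: if_splits)
next
  fix j j' assume "t = FB j" "t' = FA j'" "colA t x = colA t' x'" "pos t' x'"
  then show "t = t'" by (auto simp: pos_def split: if_splits)
next
  fix j j' assume "t = FB j" "t' = FB j'" "colA t x = colA t' x'"
  then show "t = t'" by (auto split: if_splits)
qed

lemma sep_core:
  assumes bp: "bit (p - 1) j" and bz: "\<not> bit (z - 1) j" and pM: "p - 1 < 2^M" and zM: "z - 1 < 2^M"
  shows "\<exists>t. (inP t p \<and> \<not> inP t z \<and> z \<noteq> rho t) \<or> (inP t z \<and> \<not> inP t p \<and> p \<noteq> rho t)"
proof -
  have pj: "2^j \<le> p - 1" using bit_ge_pow[OF bp] .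
  have "(1::nat) \<le> 2^j" by simp
  then have p2: "2 \<le> p" using pj by linarith
  have jM: "j < M" using bit_lt_M[OF pM bp] .
  have inA: "inP (FA j) p" using p2 bp jM by simp
  have ninA: "\<not> inP (FA j) z" using bz by simp
  show ?thesis
  proof (cases "z = rhoA j")
    case False
    then show ?thesis using inA ninA by (intro exI[of _ "FA j"]) simp
  next
    case zr: True
    show ?thesis
    proof (cases "j = 0")
      case True
      then have z0: "z = 0" using zr by (simp add: rhoA_def)
      have op: "odd (p - 1)" using bp True by (simp add: bit_0)
      show ?thesis
      proof (cases "p - 1 = 1")
        case True
        then have "p = 2" by linarith
        then have "inP (FB 0) p" "\<not> inP (FB 0) z" using jM \<open>j = 0\<close> z0 by (auto simp: bB_def)
        then show ?thesis using z0 by (intro exI[of _ "FB 0"]) simp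
      next
        case False
        obtain i where i1: "1 \<le> i" and bi: "bit (p - 1) i" using odd_ne1_bit[OF op False] by blast
        have iM: "i < M" using bit_lt_M[OF pM bi] .
        have "inP (FA i) p" using p2 bi iM by simp
        moreover have "\<not> inP (FA i) z" using z0 by simp
        moreover have "z \<noteq> rho (FA i)" using z0 i1 by (simp add: rhoA_def)
        ultimately show ?thesis by blast
      qed
    next
      case jne: False
      then have zj: "z = j + 1" using zr by (simp add: rhoA_def)
      show ?thesis
      proof (cases "p - 1 = j + 2^j")
        case True
        then have "p = bB j" using jne p2 unfolding bB_def by simp
        then have "inP (FB j) p" using jM by simp
        moreover have "\<not> inP (FB j) z" using zj jne by (simp add: bB_def)
        moreover have "z \<noteq> rho (FB j)" using zj jne by simp
        ultimately show ?thesis by blast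
      next
        case False
        then obtain i where bi: "bit (p - 1) i \<noteq> bit (j + 2^j) i" using bit_diff by blast
        then have ij: "i \<noteq> j" and bi2: "bit (p - 1) i \<noteq> bit j i" using bp by (auto simp: bit_j_plus)
        have zj1: "z - 1 = j" using zj by simp
        show ?thesis
        proof (cases "bit (p - 1) i")
          case True
          have iM: "i < M" using bit_lt_M[OF pM True] .
          have "inP (FA i) p" using p2 True iM by simp
          moreover have "\<not> inP (FA i) z" using bi2 True zj1 by simp
          moreover have "z \<noteq> rho (FA i)" using zj ij by (simp add: rhoA_def)
          ultimately show ?thesis by blast
        next
          case False
          then have bji: "bit j i" using bi2 by simp
          have ij2: "2^i \<le> j" using bit_ge_pow[OF bji] .
          have "i < 2^i" by (rule lt_pow_self)
          then have ilt: "i < j" using ij2 by linarith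
          have "j < 2^j" by (rule lt_pow_self)
          then have iM: "i < M" using ilt jM by linarith
          have "inP (FA i) z" using zj1 bji iM jne zj by simp
          moreover have "\<not> inP (FA i) p" using False by simp
          moreover have "p \<noteq> rho (FA i)"
          proof -
            have "rho (FA i) \<le> j" using ilt by (simp add: rhoA_def)
            moreover have "j < p" using pj \<open>j < 2^j\<close> by linarith
            ultimately show ?thesis by simp
          qed
          ultimately show ?thesis by blast
        qed
      qed
    qed
  qed
qed

lemma sep:
  assumes gh: "g < h" and h2: "2 \<le> h" and hK: "h \<le> 2^M"
  shows "\<exists>t. (inP t h \<and> \<not> inP t g \<and> g \<noteq> rho t) \<or> (inP t g \<and> \<not> inP t h \<and> h \<noteq> rho t)"
proof -
  have cne: "g - 1 \<noteq> h - 1" using gh h2 by linarith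
  have hM: "h - 1 < 2^M" using hK h2 by linarith
  have gM: "g - 1 < 2^M" using hK gh by linarith
  obtain j where bj: "bit (g - 1) j \<noteq> bit (h - 1) j" using bit_diff[OF cne] by blast
  show ?thesis
  proof (cases "bit (h - 1) j")
    case True
    then have "\<not> bit (g - 1) j" using bj by simp
    then show ?thesis using sep_core[OF True _ hM gM] by blast
  next
    case False
    then have "bit (g - 1) j" using bj by simp
    then show ?thesis using sep_core[OF _ False gM hM] by blast
  qed
qed

end

context CFC begin

definition adjH :: "'a \<Rightarrow> 'a \<Rightarrow> bool" where "adjH u v = ({u, v} \<in> E \<and> f u + f v = 1)"
definition isH :: "'a set \<Rightarrow> bool" where "isH e = (\<exists>u v. e = {u, v} \<and> adjH u v)"
definition bigH :: "'a set \<Rightarrow> bool" where "bigH e = (\<exists>e'. isH e' \<and> e' \<noteq> e \<and> e' \<inter> e \<noteq> {})"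
definition root :: "'a \<Rightarrow> 'a" where "root w = (SOME r. adjH\<^sup>*\<^sup>* w r)"
definition depth :: "'a \<Rightarrow> nat" where "depth w = (LEAST n. (adjH ^^ n) (root w) w)"
definition par :: "'a \<Rightarrow> 'a" where "par w = (SOME x. adjH x w \<and> Suc (depth x) = depth w)"

lemma adjH_sym: "adjH u v \<Longrightarrow> adjH v u"
  unfolding adjH_def by (simp add: insert_commute add.commute)

lemma adjH_props: "adjH u v \<Longrightarrow> {u, v} \<in> E \<and> u \<noteq> v \<and> f u \<le> 1 \<and> f v \<le> 1 \<and> f u \<noteq> f v \<and> u \<in> V \<and> v \<in> V"
proof -
  assume h: "adjH u v"
  then have e: "{u, v} \<in> E" and s: "f u + f v = 1" by (auto simp: adjH_def)
  have "f u \<noteq> f v" using s by arith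
  then show ?thesis using edge2[OF e] s e by auto
qed

lemma reach_sym: "adjH\<^sup>*\<^sup>* u v \<Longrightarrow> adjH\<^sup>*\<^sup>* v u"
proof (induction rule: rtranclp.induct)
  case (rtrancl_refl a) then show ?case by simp
next
  case (rtrancl_into_rtrancl a b c)
  then show ?case using adjH_sym converse_rtranclp_into_rtranclp by metis
qed

lemma root_reach: "adjH\<^sup>*\<^sup>* w (root w)"
  unfolding root_def by (rule someI[of _ w]) simp

lemma root_eq: "adjH\<^sup>*\<^sup>* u v \<Longrightarrow> root u = root v"
proof -
  assume uv: "adjH\<^sup>*\<^sup>* u v"
  have "(\<lambda>r. adjH\<^sup>*\<^sup>* u r) = (\<lambda>r. adjH\<^sup>*\<^sup>* v r)"
  proof
    fix r show "adjH\<^sup>*\<^sup>* u r = adjH\<^sup>*\<^sup>* v r"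
      using uv reach_sym[OF uv] by (meson rtranclp_trans)
  qed
  then show ?thesis unfolding root_def by simp
qed

lemma root_adj: "adjH u v \<Longrightarrow> root u = root v"
  by (rule root_eq) simp

lemma root_root: "root (root w) = root w"
  using root_eq[OF root_reach[of w]] by simp

lemma walk_root: "\<exists>n. (adjH ^^ n) (root w) w"
  using reach_sym[OF root_reach[of w]] by (simp add: rtranclp_imp_relpowp)

lemma depth_walk: "(adjH ^^ depth w) (root w) w"
  unfolding depth_def using walk_root by (rule LeastI_ex)

lemma depth_le: "(adjH ^^ n) (root w) w \<Longrightarrow> depth w \<le> n"
  unfolding depth_def by (rule Least_le)

lemma f_reach: "adjH\<^sup>*\<^sup>* u v \<Longrightarrow> f u \<le> 1 \<Longrightarrow> f v \<le> 1"
  by (induction rule: rtranclp.induct) (auto simp: adjH_def)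

lemma parity: "(adjH ^^ n) r w \<Longrightarrow> f r \<le> 1 \<Longrightarrow> f w = (if even n then f r else 1 - f r)"
proof (induction n arbitrary: w)
  case 0 then show ?case by simp
next
  case (Suc n)
  then obtain x where rx: "(adjH ^^ n) r x" and xw: "adjH x w" by auto
  have "f x = (if even n then f r else 1 - f r)" using Suc.IH[OF rx Suc.prems(2)] .
  moreover have "f x + f w = 1" using xw by (simp add: adjH_def)
  ultimately show ?case using Suc.prems(2) by (cases "even n"; simp; arith)
qed

lemma f_root: "adjH x y \<Longrightarrow> f (root x) \<le> 1"
  using f_reach[OF root_reach[of x]] adjH_props by blast

lemma depth_adj: "adjH x y \<Longrightarrow> depth y = Suc (depth x) \<or> depth x = Suc (depth y)"
proof -
  assume a: "adjH x y"
  have rr: "root x = root y" using root_adj[OF a] .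
  have "(adjH ^^ Suc (depth x)) (root y) y" using depth_walk[of x] a rr by auto
  then have le1: "depth y \<le> Suc (depth x)" by (rule depth_le)
  have "(adjH ^^ Suc (depth y)) (root x) x" using depth_walk[of y] adjH_sym[OF a] rr by auto
  then have le2: "depth x \<le> Suc (depth y)" by (rule depth_le)
  have fr: "f (root x) \<le> 1" using f_root[OF a] .
  have px: "f x = (if even (depth x) then f (root x) else 1 - f (root x))"
    using parity[OF depth_walk[of x] fr] .
  have py: "f y = (if even (depth y) then f (root x) else 1 - f (root x))"
    using parity[OF depth_walk[of y]] fr rr by simp
  have "f x \<noteq> f y" using adjH_props[OF a] by simp
  then have "depth x \<noteq> depth y" using px py by auto
  then show ?thesis using le1 le2 by linarith
qed

lemma depth0: "depth w = 0 \<Longrightarrow> w = root w"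
  using depth_walk[of w] by simp

lemma depth_root: "depth (root w) = 0"
proof -
  have "(adjH ^^ 0) (root (root w)) (root w)" using root_root by simp
  then show ?thesis using depth_le by fastforce
qed

lemma par_prop: "0 < depth w \<Longrightarrow> adjH (par w) w \<and> Suc (depth (par w)) = depth w"
proof -
  assume d: "0 < depth w"
  then obtain d' where dd: "depth w = Suc d'" by (cases "depth w") auto
  then have "(adjH ^^ Suc d') (root w) w" using depth_walk[of w] by simp
  then obtain x where rx: "(adjH ^^ d') (root w) x" and xw: "adjH x w" by auto
  have "root x = root w" using root_adj[OF xw] .
  then have "depth x \<le> d'" using depth_le rx by metis
  moreover have "depth w = Suc (depth x) \<or> depth x = Suc (depth w)" using depth_adj[OF xw] .
  ultimately have "Suc (depth x) = depth w" using dd by linarith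
  then have "\<exists>x. adjH x w \<and> Suc (depth x) = depth w" using xw by blast
  then show ?thesis unfolding par_def by (rule someI_ex)
qed

end

context CFC begin

definition sroot :: "'a \<Rightarrow> 'a" where "sroot r = (SOME y. adjH r y)"
definition cond2 :: "'a \<Rightarrow> bool" where
  "cond2 r = ((\<exists>y. adjH r y \<and> y \<noteq> sroot r) \<or> (\<exists>y. adjH (sroot r) y \<and> y \<noteq> r))"
definition sig1 :: "'a \<Rightarrow> 'a set" where "sig1 r = {r, sroot r}"
definition sig2 :: "'a \<Rightarrow> 'a set" where
  "sig2 r = (if (\<exists>y. adjH r y \<and> y \<noteq> sroot r) then {r, SOME y. adjH r y \<and> y \<noteq> sroot r}
             else {sroot r, SOME y. adjH (sroot r) y \<and> y \<noteq> r})"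
definition rootE :: "'a set \<Rightarrow> 'a" where "rootE e = root (SOME z. z \<in> e)"
definition hcol :: "'a set \<Rightarrow> nat" where
  "hcol e = (if e = sig1 (rootE e) then 4 else if cond2 (rootE e) \<and> e = sig2 (rootE e) then 5
             else if (\<exists>w. 0 < depth w \<and> e = {par w, w}) then 1 + (Max (depth ` e)) mod 3 else 0)"
definition HB :: "'a set \<Rightarrow> bool" where "HB e = (isH e \<and> bigH e)"

definition isHookFor :: "'a set \<Rightarrow> 'a set \<Rightarrow> bool" where
  "isHookFor e e2 = (e2 \<in> E \<and> \<not> isAnc e2 \<and> (\<exists>p w. p \<in> e \<and> e2 = {p, w} \<and> 2 \<le> f w))"
definition hook :: "'a set \<Rightarrow> 'a set" where "hook e = (SOME e2. isHookFor e e2)"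
definition isHook :: "'a set \<Rightarrow> bool" where
  "isHook e2 = (\<exists>e. isH e \<and> \<not> bigH e \<and> (\<exists>z. isHookFor e z) \<and> e2 = hook e)"

definition acol :: "'a set \<Rightarrow> nat" where
  "acol e = (let p = (SOME p. pos (fst p) (snd p) \<and> e = {snd p, anch (fst p) (snd p)}) in colA (fst p) (snd p))"
definition col :: "'a set \<Rightarrow> nat" where
  "col e = (if isAnc e then acol e else if HB e then hcol e else if isHook e then 6 else 0)"

lemma col_anc: "pos t x \<Longrightarrow> col {x, anch t x} = colA t x"
proof -
  assume p: "pos t x"
  have ia: "isAnc {x, anch t x}" using p unfolding isAnc_def by blast
  define P where "P = (\<lambda>p. pos (fst p) (snd p) \<and> {x, anch t x} = {snd p, anch (fst p) (snd p)})"
  have "P (t, x)" using p unfolding P_def by simp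
  then have "P (SOME p. P p)" by (rule someI)
  then have q: "pos (fst (SOME p. P p)) (snd (SOME p. P p))"
    "{x, anch t x} = {snd (SOME p. P p), anch (fst (SOME p. P p)) (snd (SOME p. P p))}"
    unfolding P_def by auto
  have "t = fst (SOME p. P p) \<and> x = snd (SOME p. P p)" using anc_unique[OF p q(1) q(2)] .
  then have "acol {x, anch t x} = colA t x" unfolding acol_def P_def[symmetric] Let_def by simp
  then show ?thesis using ia unfolding col_def by simp
qed

lemma hcol_le: "hcol e \<le> 5"
proof -
  have h: "1 + (Max (depth ` e)) mod 3 \<le> 5" by simp
  show ?thesis unfolding hcol_def using h by (simp split: if_split)
qed

lemma col_nonanc_eq: "\<not> isAnc e \<Longrightarrow> col e = (if HB e then hcol e else if isHook e then 6 else 0)"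
  unfolding col_def by simp

lemma col_nonanc: "\<not> isAnc e \<Longrightarrow> col e \<le> 6"
  using col_nonanc_eq[of e] hcol_le[of e] by (cases "HB e"; cases "isHook e") simp_all

lemma isH_not_anc: "isH e \<Longrightarrow> \<not> isAnc e"
proof
  assume "isH e" "isAnc e"
  then obtain u v t x where e1: "e = {u, v}" "adjH u v" and e2: "pos t x" "e = {x, anch t x}"
    unfolding isH_def isAnc_def by blast
  have "x \<in> {u, v}" using e1 e2 by auto
  then have "f x \<le> 1" using adjH_props[OF e1(2)] by auto
  moreover have "2 \<le> f x" using e2 inP_ge2 unfolding pos_def by auto
  ultimately show False by simp
qed

lemma col_HB: "HB e \<Longrightarrow> col e = hcol e"
proof -
  assume h: "HB e"
  then have "\<not> isAnc e" using isH_not_anc unfolding HB_def by blast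
  then show ?thesis using col_nonanc_eq h by simp
qed

lemma col_small: "1 \<le> col e \<Longrightarrow> col e \<le> 5 \<Longrightarrow> HB e \<and> col e = hcol e"
proof -
  assume a: "1 \<le> col e" "col e \<le> 5"
  have "\<not> isAnc e"
  proof
    assume "isAnc e"
    then obtain t x where "pos t x" "e = {x, anch t x}" unfolding isAnc_def by blast
    then have "col e = colA t x" "7 \<le> colA t x" using col_anc colA_range by auto
    then show False using a by simp
  qed
  then have "col e = (if HB e then hcol e else if isHook e then 6 else 0)" by (rule col_nonanc_eq)
  then show ?thesis using a by (cases "HB e"; cases "isHook e") simp_all
qed

lemma col_bound: "col e < 8 + 3 * M"
proof (cases "isAnc e")
  case True
  then obtain t x where tx: "pos t x" "e = {x, anch t x}" unfolding isAnc_def by blast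
  then have "col e = colA t x" using col_anc by simp
  then show ?thesis using colA_range[OF tx(1)] by simp
next
  case False
  then show ?thesis using col_nonanc[OF False] by linarith
qed

lemma closedD: "e2 \<in> closed_edge_nbhd E e \<Longrightarrow> e2 \<in> E \<and> e2 \<inter> e \<noteq> {}"
  unfolding closed_edge_nbhd_def by auto

lemma openI: "e2 \<in> E \<Longrightarrow> e2 \<inter> e \<noteq> {} \<Longrightarrow> e2 \<noteq> e \<Longrightarrow> e2 \<in> open_edge_nbhd E e"
  unfolding open_edge_nbhd_def closed_edge_nbhd_def by auto

lemma satI:
  assumes w: "w \<in> E" "w \<inter> e \<noteq> {}" "w \<noteq> e"
    and u: "\<And>e2. e2 \<in> E \<Longrightarrow> e2 \<inter> e \<noteq> {} \<Longrightarrow> e2 \<noteq> w \<Longrightarrow> col e2 = col w \<Longrightarrow> False"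
  shows "satisfied E col e"
  unfolding satisfied_def
proof (rule bexI[of _ w])
  show "w \<in> open_edge_nbhd E e" using openI[OF w] .
  show "\<forall>e''\<in>closed_edge_nbhd E e - {w}. col e'' \<noteq> col w"
  proof
    fix e2 assume "e2 \<in> closed_edge_nbhd E e - {w}"
    then have "e2 \<in> E" "e2 \<inter> e \<noteq> {}" "e2 \<noteq> w" using closedD by auto
    then show "col e2 \<noteq> col w" using u by blast
  qed
qed

lemma sat_fam:
  assumes e: "{x, y} \<in> E" and py: "pos t y" and nx: "\<not> inP t (f x)" and rx: "f x \<noteq> rho t"
  shows "satisfied E col {x, y}"
proof -
  let ?w = "{y, anch t y}"
  have ap: "?w \<in> E" "f (anch t y) = rho t" using anch_prop[OF py] by auto
  have ay: "anch t y \<noteq> y" using anch_lt[OF py] by auto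
  have ax: "anch t y \<noteq> x" using ap(2) rx by auto
  show ?thesis
  proof (rule satI[OF ap(1)])
    show "?w \<inter> {x, y} \<noteq> {}" by auto
    show "?w \<noteq> {x, y}" using ay ax by (auto simp: doubleton_eq_iff)
  next
    fix e2 assume e2: "e2 \<in> E" "e2 \<inter> {x, y} \<noteq> {}" "e2 \<noteq> ?w" "col e2 = col ?w"
    have cw: "col ?w = colA t y" using col_anc[OF py] .
    then have "7 \<le> col e2" using colA_range[OF py] e2(4) by simp
    then have "isAnc e2"
    proof -
      assume c7: "7 \<le> col e2"
      show "isAnc e2"
      proof (rule ccontr)
        assume "\<not> isAnc e2"
        then have "col e2 \<le> 6" by (rule col_nonanc)
        then show False using c7 by simp
      qed
    qed
    then obtain t2 x2 where p2: "pos t2 x2" and e2eq: "e2 = {x2, anch t2 x2}" unfolding isAnc_def by blast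
    have "colA t2 x2 = colA t y" using e2(4) cw col_anc[OF p2] e2eq by simp
    then have tt: "t2 = t" using colA_fam[OF p2 py] by simp
    have ap2: "f (anch t x2) = rho t" using anch_prop[OF p2] tt by simp
    have rP: "\<not> inP t (rho t)" using rho_notP py unfolding pos_def by blast
    from e2(2) e2eq consider "x2 = x" | "x2 = y" | "anch t2 x2 = x" | "anch t2 x2 = y" by auto
    then show False
    proof cases
      case 1 then show False using p2 tt nx unfolding pos_def by simp
    next
      case 2 then show False using e2(3) e2eq tt by simp
    next
      case 3 then show False using ap2 tt rx by simp
    next
      case 4 then show False using ap2 tt rP py unfolding pos_def by simp
    qed
  qed
qed

end

context CFC begin

lemma sroot_adj: "adjH r y \<Longrightarrow> adjH r (sroot r)"
  unfolding sroot_def by (rule someI)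

lemma rootE_adj: "adjH u v \<Longrightarrow> rootE {u, v} = root u"
proof -
  assume a: "adjH u v"
  have "(SOME z. z \<in> {u, v}) \<in> {u, v}" by (rule someI[of _ u]) simp
  then show ?thesis unfolding rootE_def using root_adj[OF a] by auto
qed

lemma isH_adj: "isH e \<Longrightarrow> \<exists>a b. e = {a, b} \<and> adjH a b"
  unfolding isH_def by blast

lemma touch_root:
  assumes h: "HB e2" and t: "e2 \<inter> {x, y} \<noteq> {}" and a: "adjH x y"
  shows "rootE e2 = root x"
proof -
  obtain p q where e2: "e2 = {p, q}" and pq: "adjH p q" using h isH_adj unfolding HB_def by blast
  have r1: "rootE e2 = root p" using rootE_adj[OF pq] e2 by simp
  have r2: "root p = root q" using root_adj[OF pq] .
  have r3: "root x = root y" using root_adj[OF a] .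
  show ?thesis using t e2 r1 r2 r3 by auto
qed

lemma Max_dep: "0 < depth w \<Longrightarrow> Max (depth ` {par w, w}) = depth w"
  using par_prop[of w] by (simp add: max_def)

lemma tree_col: "0 < depth w \<Longrightarrow> hcol {par w, w} \<noteq> 0"
proof -
  assume d: "0 < depth w"
  then have "\<exists>w'. 0 < depth w' \<and> {par w, w} = {par w', w'}" by blast
  then show ?thesis by (simp add: hcol_def split: if_split)
qed

lemma hcol_4: "hcol e = 4 \<Longrightarrow> e = sig1 (rootE e)"
  unfolding hcol_def by (auto split: if_splits)

lemma hcol_5: "hcol e = 5 \<Longrightarrow> e = sig2 (rootE e)"
  unfolding hcol_def by (auto split: if_splits)

lemma hcol_tree:
  assumes a: "1 \<le> hcol e" "hcol e \<le> 3"
  shows "\<exists>w. 0 < depth w \<and> e = {par w, w} \<and> hcol e = 1 + depth w mod 3"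
proof -
  have n1: "e \<noteq> sig1 (rootE e)"
  proof
    assume "e = sig1 (rootE e)" then have "hcol e = 4" unfolding hcol_def by simp
    then show False using a by simp
  qed
  have n2: "\<not> (cond2 (rootE e) \<and> e = sig2 (rootE e))"
  proof
    assume "cond2 (rootE e) \<and> e = sig2 (rootE e)" then have "hcol e = 5" using n1 unfolding hcol_def by simp
    then show False using a by simp
  qed
  have ex: "\<exists>w. 0 < depth w \<and> e = {par w, w}"
  proof (rule ccontr)
    assume "\<not> ?thesis" then have "hcol e = 0" using n1 n2 unfolding hcol_def by simp
    then show False using a by simp
  qed
  then obtain w where w: "0 < depth w" "e = {par w, w}" by blast
  have "hcol e = 1 + (Max (depth ` e)) mod 3"
    unfolding hcol_def if_not_P[OF n1] if_not_P[OF n2] if_P[OF ex] ..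
  then show ?thesis using w Max_dep[OF w(1)] by auto
qed

lemma sat_H:
  assumes a: "adjH x y" and dy: "depth y = Suc (depth x)" and b: "bigH {x, y}"
  shows "satisfied E col {x, y}"
proof -
  have ap: "{x, y} \<in> E" "x \<noteq> y" using adjH_props[OF a] by auto
  have iHe0: "isH {x, y}" unfolding isH_def using a by blast
  have HBe: "HB {x, y}" using iHe0 b unfolding HB_def by blast
  let ?r = "root x"
  have small: "HB e2 \<and> hcol e2 = col e2 \<and> rootE e2 = ?r"
    if "e2 \<in> E" "e2 \<inter> {x, y} \<noteq> {}" "1 \<le> col e2" "col e2 \<le> 5" for e2
    using col_small[OF that(3,4)] touch_root[OF _ that(2) a] by auto
  show ?thesis
  proof (cases "depth x = 0")
    case False
    then have dx: "0 < depth x" by simp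
    let ?p = "{par x, x}"
    have pp: "adjH (par x) x" "Suc (depth (par x)) = depth x" using par_prop[OF dx] by auto
    have pE: "?p \<in> E" using adjH_props[OF pp(1)] by simp
    have pne: "par x \<noteq> y" using pp(2) dy by auto
    have pne2: "par x \<noteq> x" using adjH_props[OF pp(1)] by simp
    have pneq: "?p \<noteq> {x, y}" using pne pne2 by (auto simp: doubleton_eq_iff)
    have HBp: "HB ?p"
    proof -
      have "isH ?p" using pp(1) unfolding isH_def by blast
      moreover have "bigH ?p" unfolding bigH_def
        using pneq iHe0 by (intro exI[of _ "{x, y}"]) auto
      ultimately show ?thesis unfolding HB_def by simp
    qed
    have rp: "rootE ?p = ?r" using rootE_adj[OF pp(1)] root_adj[OF pp(1)] by simp
    have cp: "col ?p = hcol ?p" using col_HB[OF HBp] .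
    have cp1: "1 \<le> hcol ?p" using tree_col[OF dx] by simp
    show ?thesis
    proof (rule satI[OF pE])
      show "?p \<inter> {x, y} \<noteq> {}" by auto
      show "?p \<noteq> {x, y}" using pneq .
    next
      fix e2 assume e2: "e2 \<in> E" "e2 \<inter> {x, y} \<noteq> {}" "e2 \<noteq> ?p" "col e2 = col ?p"
      have sm: "HB e2" "hcol e2 = hcol ?p" "rootE e2 = ?r"
        using small[OF e2(1,2)] e2(4) cp cp1 hcol_le[of ?p] by auto
      show False
      proof (cases "?p = sig1 ?r")
        case True
        then have "hcol ?p = 4" unfolding hcol_def using rp by simp
        then have "e2 = sig1 ?r" using sm hcol_4 by metis
        then show False using True e2(3) by simp
      next
        case ns1: False
        show False
        proof (cases "cond2 ?r \<and> ?p = sig2 ?r")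
          case True
          then have "hcol ?p = 5" unfolding hcol_def using rp ns1 by simp
          then have "e2 = sig2 ?r" using sm hcol_5 by metis
          then show False using True e2(3) by simp
        next
          case ns2: False
          have ns1': "?p \<noteq> sig1 (rootE ?p)" using ns1 rp by simp
          have ns2': "\<not> (cond2 (rootE ?p) \<and> ?p = sig2 (rootE ?p))" using ns2 rp by simp
          have ex: "\<exists>w. 0 < depth w \<and> ?p = {par w, w}" using dx by blast
          have "hcol ?p = 1 + (Max (depth ` ?p)) mod 3"
            unfolding hcol_def if_not_P[OF ns1'] if_not_P[OF ns2'] if_P[OF ex] ..
          then have hp: "hcol ?p = 1 + depth x mod 3" using Max_dep[OF dx] by simp
          then have "hcol e2 \<noteq> 4" "hcol e2 \<noteq> 5" using sm by auto
          have "1 \<le> hcol e2" "hcol e2 \<le> 3" using sm(2) hp by auto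
          then obtain w where w: "0 < depth w" "e2 = {par w, w}" "hcol e2 = 1 + depth w mod 3"
            using hcol_tree by blast
          have md: "depth w mod 3 = depth x mod 3" using w(3) sm(2) hp by simp
          have pw: "Suc (depth (par w)) = depth w" using par_prop[OF w(1)] by simp
          from e2(2) w(2) consider "w = x" | "w = y" | "par w = x" | "par w = y" by auto
          then show False
          proof cases
            case 1 then show False using e2(3) w(2) by simp
          next
            case 2 then have "depth w = Suc (depth x)" using dy by simp
            then show False using md by presburger
          next
            case 3 then have "depth w = Suc (depth x)" using pw by simp
            then show False using md by presburger
          next
            case 4 then have "depth w = Suc (Suc (depth x))" using pw dy by simp
            then show False using md by presburger
          qed
        qed
      qed
    qed
  next
    case True
    then have xr: "x = ?r" using depth0 by simp
    have rr: "root ?r = ?r" using root_root .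
    have sa: "adjH ?r (sroot ?r)" using sroot_adj[of ?r y] a xr by simp
    have rs1: "rootE (sig1 ?r) = ?r" unfolding sig1_def using rootE_adj[OF sa] rr by simp
    show ?thesis
    proof (cases "{x, y} = sig1 ?r")
      case False
      let ?s = "sig1 ?r"
      have sE: "?s \<in> E" using adjH_props[OF sa] unfolding sig1_def by simp
      have HBs: "HB ?s"
      proof -
        have "isH ?s" using sa unfolding isH_def sig1_def by blast
        moreover have "bigH ?s" unfolding bigH_def using False iHe0 xr
          unfolding sig1_def by (intro exI[of _ "{x, y}"]) auto
        ultimately show ?thesis unfolding HB_def by simp
      qed
      have cs: "col ?s = 4" using col_HB[OF HBs] rs1 unfolding hcol_def by simp
      show ?thesis
      proof (rule satI[OF sE])
        show "?s \<inter> {x, y} \<noteq> {}" using xr unfolding sig1_def by auto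
        show "?s \<noteq> {x, y}" using False by simp
      next
        fix e2 assume e2: "e2 \<in> E" "e2 \<inter> {x, y} \<noteq> {}" "e2 \<noteq> ?s" "col e2 = col ?s"
        have sm: "HB e2" "hcol e2 = 4" "rootE e2 = ?r" using small[OF e2(1,2)] e2(4) cs by auto
        then have "e2 = sig1 ?r" using hcol_4 by metis
        then show False using e2(3) by simp
      qed
    next
      case True
      have c2: "cond2 ?r"
      proof -
        obtain e' where e': "isH e'" "e' \<noteq> {x, y}" "e' \<inter> {x, y} \<noteq> {}" using b unfolding bigH_def by blast
        obtain p q where pq: "e' = {p, q}" "adjH p q" using isH_adj[OF e'(1)] by blast
        have s1: "{x, y} = {?r, sroot ?r}" using True unfolding sig1_def .
        have ys: "y = sroot ?r" using s1 xr ap(2) by (auto simp: doubleton_eq_iff)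
        have "(\<exists>z. adjH ?r z \<and> z \<noteq> sroot ?r) \<or> (\<exists>z. adjH (sroot ?r) z \<and> z \<noteq> ?r)"
        proof -
          from e'(3) pq(1) consider "p = x" | "q = x" | "p = y" | "q = y" by auto
          then show ?thesis
          proof cases
            case 1
            then have "q \<noteq> sroot ?r" using pq(1) e'(2) xr ys by auto
            then show ?thesis using pq(2) 1 xr by auto
          next
            case 2
            then have "p \<noteq> sroot ?r" using pq(1) e'(2) xr ys by auto
            then show ?thesis using adjH_sym[OF pq(2)] 2 xr by auto
          next
            case 3
            then have "q \<noteq> ?r" using pq(1) e'(2) xr ys by auto
            then show ?thesis using pq(2) 3 ys by auto
          next
            case 4
            then have "p \<noteq> ?r" using pq(1) e'(2) xr ys by auto
            then show ?thesis using adjH_sym[OF pq(2)] 4 ys by auto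
          qed
        qed
        then show ?thesis unfolding cond2_def .
      qed
      let ?s = "sig2 ?r"
      have s2: "(\<exists>z. ?s = {?r, z} \<and> adjH ?r z \<and> z \<noteq> sroot ?r) \<or> (\<exists>z. ?s = {sroot ?r, z} \<and> adjH (sroot ?r) z \<and> z \<noteq> ?r)"
      proof (cases "\<exists>z. adjH ?r z \<and> z \<noteq> sroot ?r")
        case True
        then have "adjH ?r (SOME z. adjH ?r z \<and> z \<noteq> sroot ?r) \<and> (SOME z. adjH ?r z \<and> z \<noteq> sroot ?r) \<noteq> sroot ?r"
          by (rule someI_ex)
        then show ?thesis using True unfolding sig2_def by auto
      next
        case False
        then have ex: "\<exists>z. adjH (sroot ?r) z \<and> z \<noteq> ?r" using c2 unfolding cond2_def by blast
        then have "adjH (sroot ?r) (SOME z. adjH (sroot ?r) z \<and> z \<noteq> ?r) \<and> (SOME z. adjH (sroot ?r) z \<and> z \<noteq> ?r) \<noteq> ?r"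
          by (rule someI_ex)
        then show ?thesis using False unfolding sig2_def by auto
      qed
      have ys: "y = sroot ?r" using True xr ap(2) unfolding sig1_def by (auto simp: doubleton_eq_iff)
      obtain a0 z where az: "?s = {a0, z}" "adjH a0 z" "(a0 = ?r \<and> z \<noteq> sroot ?r) \<or> (a0 = sroot ?r \<and> z \<noteq> ?r)"
        using s2 by blast
      have zne: "z \<noteq> a0" using adjH_props[OF az(2)] by auto
      have ra0: "root a0 = ?r" using az(3) rr root_adj[OF sa] by auto
      have sprops: "?s \<in> E" "?s \<inter> {x, y} \<noteq> {}" "?s \<noteq> {x, y}" "isH ?s" "rootE ?s = ?r"
      proof -
        show "?s \<in> E" using adjH_props[OF az(2)] az(1) by simp
        show "?s \<inter> {x, y} \<noteq> {}" using az(1,3) xr ys by auto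
        show "?s \<noteq> {x, y}" using az(1,3) xr ys zne by (auto simp: doubleton_eq_iff)
        show "isH ?s" unfolding isH_def using az by blast
        show "rootE ?s = ?r" using rootE_adj[OF az(2)] az(1) ra0 by simp
      qed
      have iHe: "isH {x, y}" unfolding isH_def using a by blast
      have "bigH ?s" unfolding bigH_def
        using iHe sprops(2,3) by (intro exI[of _ "{x, y}"]) (metis Int_commute)
      then have HBs: "HB ?s" unfolding HB_def using sprops(4) by simp
      have sne1: "?s \<noteq> sig1 ?r" using sprops(3) True by simp
      have cs: "col ?s = 5" using col_HB[OF HBs] sprops(5) sne1 c2 unfolding hcol_def by simp
      show ?thesis
      proof (rule satI[OF sprops(1,2,3)])
        fix e2 assume e2: "e2 \<in> E" "e2 \<inter> {x, y} \<noteq> {}" "e2 \<noteq> ?s" "col e2 = col ?s"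
        have sm: "HB e2" "hcol e2 = 5" "rootE e2 = ?r" using small[OF e2(1,2)] e2(4) cs by auto
        then have "e2 = sig2 ?r" using hcol_5 by metis
        then show False using e2(3) by simp
      qed
    qed
  qed
qed

end

context CFC begin

lemma rho0: "rho t = 0 \<Longrightarrow> t = FA 0"
  by (cases t) (auto simp: rhoA_def split: if_splits)

lemma rho1: "rho t = 1 \<Longrightarrow> \<exists>j. t = FB j"
  by (cases t) (auto simp: rhoA_def split: if_splits)

lemma colA7: "pos t x \<Longrightarrow> colA t x = 7 \<Longrightarrow> t = FA 0 \<and> x = desig (FA 0) (anch (FA 0) x)"
  by (cases t) (auto split: if_splits)

lemma colAB: "pos t x \<Longrightarrow> colA t x = 8 + M + 2 * j \<Longrightarrow> t = FB j \<and> x = desig (FB j) (anch (FB j) x)"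
proof (cases t)
  case (FA j')
  assume "pos t x" "colA t x = 8 + M + 2 * j"
  then show ?thesis using FA by (auto simp: pos_def split: if_splits)
next
  case (FB j')
  assume "pos t x" "colA t x = 8 + M + 2 * j"
  then show ?thesis using FB by (auto split: if_splits) presburger
qed

lemma isAnc_col7: "7 \<le> col e \<Longrightarrow> isAnc e"
proof (rule ccontr)
  assume "7 \<le> col e" "\<not> isAnc e"
  then show False using col_nonanc by fastforce
qed

lemma sat_desig:
  assumes ex: "\<exists>x. pos t x \<and> anch t x = a" and ab: "{a, b} \<in> E" and fa: "f a \<le> 1" and fb: "f b \<le> 1"
    and fab: "f b \<noteq> rho t"
    and cuniq: "\<And>t2 x2. pos t2 x2 \<Longrightarrow> colA t2 x2 = colA t (desig t a) \<Longrightarrow> t2 = t \<and> x2 = desig t (anch t x2)"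
  shows "satisfied E col {a, b}"
proof -
  let ?d = "desig t a"
  have d: "pos t ?d \<and> anch t ?d = a" using someI_ex[OF ex] unfolding desig_def .
  let ?w = "{?d, anch t ?d}"
  have wE: "?w \<in> E" using anch_prop d by blast
  have fd: "2 \<le> f ?d" using d inP_ge2 unfolding pos_def by blast
  have dne: "?d \<noteq> a" "?d \<noteq> b" using fd fa fb by auto
  have cw: "col ?w = colA t ?d" using col_anc d by blast
  show ?thesis
  proof (rule satI[OF wE])
    show "?w \<inter> {a, b} \<noteq> {}" using d by auto
    show "?w \<noteq> {a, b}" using dne by (auto simp: doubleton_eq_iff)
  next
    fix e2 assume e2: "e2 \<in> E" "e2 \<inter> {a, b} \<noteq> {}" "e2 \<noteq> ?w" "col e2 = col ?w"
    have "7 \<le> col e2" using e2(4) cw colA_range d by simp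
    then have "isAnc e2" by (rule isAnc_col7)
    then obtain t2 x2 where p2: "pos t2 x2" and e2eq: "e2 = {x2, anch t2 x2}" unfolding isAnc_def by blast
    have "colA t2 x2 = colA t ?d" using col_anc[OF p2] e2eq e2(4) cw by simp
    then have cc: "t2 = t \<and> x2 = desig t (anch t x2)" by (rule cuniq[OF p2])
    have tt: "t2 = t" using cc by (rule conjunct1)
    have xx: "x2 = desig t (anch t x2)" using cc by (rule conjunct2)
    have fx2: "2 \<le> f x2" using p2 inP_ge2 unfolding pos_def by blast
    then have "x2 \<noteq> a" "x2 \<noteq> b" using fa fb by auto
    then have an: "anch t x2 \<in> {a, b}" using e2(2) e2eq tt by auto
    have "f (anch t x2) = rho t" using anch_prop p2 tt by blast
    then have "anch t x2 = a" using an fab by auto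
    then have "desig t (anch t x2) = desig t a" by simp
    then have "x2 = ?d" using trans[OF xx] by blast
    then show False using e2(3) e2eq tt by simp
  qed
qed

lemma sat_iso:
  assumes a: "adjH u v" and fu: "f u = 0" and nb: "\<not> bigH {u, v}" and ni: "\<not> isolated_edge E {u, v}"
  shows "satisfied E col {u, v}"
proof -
  have ap: "{u, v} \<in> E" "u \<noteq> v" "f u + f v = 1" using adjH_props[OF a] a unfolding adjH_def by auto
  then have fv: "f v = 1" using fu by simp
  have iH: "isH {u, v}" unfolding isH_def using a by blast
  show ?thesis
  proof (cases "\<exists>x. pos (FA 0) x \<and> anch (FA 0) x = u")
    case True
    show ?thesis
    proof (rule sat_desig[OF True ap(1)])
      show "f u \<le> 1" "f v \<le> 1" "f v \<noteq> rho (FA 0)" using fu fv by (auto simp: rhoA_def)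
    next
      fix t2 x2 assume p2: "pos t2 x2" and c: "colA t2 x2 = colA (FA 0) (desig (FA 0) u)"
      have d: "pos (FA 0) (desig (FA 0) u) \<and> anch (FA 0) (desig (FA 0) u) = u"
        using someI_ex[OF True] unfolding desig_def .
      have an: "anch (FA 0) (desig (FA 0) u) = u" using d by blast
      have "colA (FA 0) (desig (FA 0) u) = 7" unfolding colA.simps an by simp
      then have "colA t2 x2 = 7" using c by simp
      then show "t2 = FA 0 \<and> x2 = desig (FA 0) (anch (FA 0) x2)" by (rule colA7[OF p2])
    qed
  next
    case noA: False
    show ?thesis
    proof (cases "\<exists>j x. pos (FB j) x \<and> anch (FB j) x = v")
      case True
      then obtain j where exj: "\<exists>x. pos (FB j) x \<and> anch (FB j) x = v" by blast
      have uvE: "{v, u} \<in> E" using ap(1) by (simp add: insert_commute)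
      have "satisfied E col {v, u}"
      proof (rule sat_desig[OF exj uvE])
        show "f v \<le> 1" "f u \<le> 1" "f u \<noteq> rho (FB j)" using fu fv by auto
      next
        fix t2 x2 assume p2: "pos t2 x2" and c: "colA t2 x2 = colA (FB j) (desig (FB j) v)"
        have d: "pos (FB j) (desig (FB j) v) \<and> anch (FB j) (desig (FB j) v) = v"
          using someI_ex[OF exj] unfolding desig_def .
        have an: "anch (FB j) (desig (FB j) v) = v" using d by blast
        have "colA (FB j) (desig (FB j) v) = 8 + M + 2 * j" unfolding colA.simps an by simp
        then have "colA t2 x2 = 8 + M + 2 * j" using c by simp
        then show "t2 = FB j \<and> x2 = desig (FB j) (anch (FB j) x2)" by (rule colAB[OF p2])
      qed
      then show ?thesis by (simp add: insert_commute)
    next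
      case noB: False
      obtain e' where e': "e' \<in> E" "e' \<inter> {u, v} \<noteq> {}" "e' \<noteq> {u, v}"
        using ni unfolding isolated_edge_def open_edge_nbhd_def closed_edge_nbhd_def by blast
      obtain p q where pq: "p \<noteq> q" "p \<in> V" "q \<in> V" "e' = {p, q}" using edgeE[OF e'(1)] by blast
      obtain p0 w0 where pw: "e' = {p0, w0}" "p0 \<in> {u, v}" "w0 \<notin> {u, v}"
      proof -
        have "p \<in> {u, v} \<or> q \<in> {u, v}" using e'(2) pq(4) by auto
        moreover have "\<not> (p \<in> {u, v} \<and> q \<in> {u, v})"
        proof
          assume "p \<in> {u, v} \<and> q \<in> {u, v}"
          then have "e' = {u, v}" using pq(1,4) by auto
          then show False using e'(3) by simp
        qed
        ultimately show ?thesis using that pq(4) by (metis insert_commute)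
      qed
      have p0E: "{p0, w0} \<in> E" using e'(1) pw(1) by simp
      have bigc: False if "adjH p0 w0"
      proof -
        have "isH e'" unfolding isH_def using that pw(1) by blast
        then have "bigH {u, v}" unfolding bigH_def using e'(2,3) by blast
        then show False using nb by simp
      qed
      have fw: "2 \<le> f w0"
      proof -
        have ne: "f p0 \<noteq> f w0" using propc[OF p0E] .
        show ?thesis
        proof (rule ccontr)
          assume "\<not> 2 \<le> f w0"
          then have "f p0 + f w0 = 1" using ne pw(2) fu fv by auto
          then have "adjH p0 w0" using p0E unfolding adjH_def by simp
          then show False by (rule bigc)
        qed
      qed
      have nA: "\<not> isAnc e'"
      proof
        assume "isAnc e'"
        then obtain t x where px: "pos t x" and ex: "e' = {x, anch t x}" unfolding isAnc_def by blast
        have fx: "2 \<le> f x" using px inP_ge2 unfolding pos_def by blast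
        have "f p0 \<le> 1" using pw(2) fu fv by auto
        then have "x \<noteq> p0" using fx by auto
        then have xw: "x = w0" and ap0: "anch t x = p0" using ex pw(1) by (auto simp: doubleton_eq_iff)
        have rp: "f p0 = rho t" using anch_prop[OF px] ap0 by simp
        show False
        proof (cases "p0 = u")
          case True
          then have "t = FA 0" using rp fu rho0 by simp
          then show False using noA px ap0 True by blast
        next
          case False
          then have "p0 = v" using pw(2) by simp
          then obtain j where "t = FB j" using rp fv rho1 by auto
          then show False using noB px ap0 \<open>p0 = v\<close> by blast
        qed
      qed
      have hf: "isHookFor {u, v} e'" unfolding isHookFor_def using e'(1) nA pw fw by blast
      let ?h = "hook {u, v}"
      have hh: "isHookFor {u, v} ?h" unfolding hook_def using hf by (rule someI)
      then obtain p1 w1 where h1: "?h \<in> E" "\<not> isAnc ?h" "p1 \<in> {u, v}" "?h = {p1, w1}" "2 \<le> f w1"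
        unfolding isHookFor_def by blast
      have isHk: "isHook ?h" unfolding isHook_def using iH nb hf by blast
      have nHB: "\<not> HB ?h"
      proof
        assume "HB ?h"
        then obtain a0 b0 where "?h = {a0, b0}" "adjH a0 b0" using isH_adj unfolding HB_def by blast
        then have "w1 \<in> {a0, b0}" using h1(4) by auto
        then have "f w1 \<le> 1" using adjH_props[OF \<open>adjH a0 b0\<close>] by auto
        then show False using h1(5) by simp
      qed
      have ch: "col ?h = 6" using col_nonanc_eq[OF h1(2)] nHB isHk by simp
      have w1n: "w1 \<notin> {u, v}" using h1(5) fu fv by auto
      show ?thesis
      proof (rule satI[OF h1(1)])
        show "?h \<inter> {u, v} \<noteq> {}" using h1(3,4) by auto
        show "?h \<noteq> {u, v}" using h1(4) w1n by auto
      next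
        fix e2 assume e2: "e2 \<in> E" "e2 \<inter> {u, v} \<noteq> {}" "e2 \<noteq> ?h" "col e2 = col ?h"
        have nA2: "\<not> isAnc e2"
        proof
          assume "isAnc e2"
          then obtain t x where "pos t x" "e2 = {x, anch t x}" unfolding isAnc_def by blast
          then have "7 \<le> col e2" using col_anc colA_range by metis
          then show False using e2(4) ch by simp
        qed
        have "col e2 = (if HB e2 then hcol e2 else if isHook e2 then 6 else 0)" using col_nonanc_eq[OF nA2] .
        then have ihk: "isHook e2" using e2(4) ch hcol_le[of e2] by (auto split: if_splits)
        then obtain e1 where e1: "isH e1" "\<not> bigH e1" "\<exists>z. isHookFor e1 z" "e2 = hook e1"
          unfolding isHook_def by blast
        have "isHookFor e1 e2" using someI_ex[OF e1(3)] e1(4) unfolding hook_def by simp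
        then obtain p2 w2 where h2: "p2 \<in> e1" "e2 = {p2, w2}" "2 \<le> f w2" unfolding isHookFor_def by blast
        have "w2 \<notin> {u, v}" using h2(3) fu fv by auto
        then have "p2 \<in> {u, v}" using e2(2) h2(2) by auto
        then have int: "e1 \<inter> {u, v} \<noteq> {}" using h2(1) by auto
        have "e1 = {u, v}"
        proof (rule ccontr)
          assume "e1 \<noteq> {u, v}"
          then have "bigH {u, v}" unfolding bigH_def using e1(1) int by blast
          then show False using nb by simp
        qed
        then show False using e1(4) e2(3) by simp
      qed
    qed
  qed
qed

lemma conflict_free_col: "conflict_free E col"
  unfolding conflict_free_def
proof (intro ballI impI)
  fix e assume eE: "e \<in> E" and ni: "\<not> isolated_edge E e"
  obtain u v where uv: "u \<noteq> v" "u \<in> V" "v \<in> V" "e = {u, v}" using edgeE[OF eE] by blast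
  have fne: "f u \<noteq> f v" using propc eE uv(4) by simp
  have key: "satisfied E col e" if ab: "e = {a, b}" "f a < f b" "a \<in> V" "b \<in> V" for a b
  proof (cases "2 \<le> f b")
    case True
    have "f b \<le> 2^M" using bnd[OF ab(4)] KM by simp
    then obtain t where t: "(inP t (f b) \<and> \<not> inP t (f a) \<and> f a \<noteq> rho t) \<or> (inP t (f a) \<and> \<not> inP t (f b) \<and> f b \<noteq> rho t)"
      using sep[OF ab(2) True] by blast
    then show ?thesis
    proof
      assume h: "inP t (f b) \<and> \<not> inP t (f a) \<and> f a \<noteq> rho t"
      have "satisfied E col {a, b}" using sat_fam[of a b t] eE ab h unfolding pos_def by simp
      then show ?thesis using ab by simp
    next
      assume h: "inP t (f a) \<and> \<not> inP t (f b) \<and> f b \<noteq> rho t"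
      have "{b, a} \<in> E" using eE ab by (simp add: insert_commute)
      then have "satisfied E col {b, a}" using sat_fam[of b a t] ab h unfolding pos_def by simp
      then show ?thesis using ab by (simp add: insert_commute)
    qed
  next
    case False
    then have fa: "f a = 0" and fb: "f b = 1" using ab(2) by auto
    have aH: "adjH a b" unfolding adjH_def using eE ab fa fb by simp
    show ?thesis
    proof (cases "bigH {a, b}")
      case True
      from depth_adj[OF aH] show ?thesis
      proof
        assume "depth b = Suc (depth a)"
        then show ?thesis using sat_H[OF aH _ True] ab by simp
      next
        assume d: "depth a = Suc (depth b)"
        have "bigH {b, a}" using True by (simp add: insert_commute)
        then have "satisfied E col {b, a}" using sat_H[OF adjH_sym[OF aH] d] by simp
        then show ?thesis using ab by (simp add: insert_commute)
      qed
    next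
      case False
      then show ?thesis using sat_iso[OF aH fa False] ni ab by simp
    qed
  qed
  show "satisfied E col e"
  proof (cases "f u < f v")
    case True then show ?thesis using key[OF uv(4) _ uv(2,3)] by blast
  next
    case False
    then have "f v < f u" using fne by simp
    moreover have "e = {v, u}" using uv(4) by (simp add: insert_commute)
    ultimately show ?thesis using key uv(2,3) by blast
  qed
qed

end

lemma cf_ocf: "conflict_free E c \<Longrightarrow> open_conflict_free E c"
  unfolding open_conflict_free_def
proof (intro ballI impI)
  fix e assume cf: "conflict_free E c" and eE: "e \<in> E" and ne: "open_edge_nbhd E e \<noteq> {}"
  then have "satisfied E c e" unfolding conflict_free_def isolated_edge_def by blast
  then obtain e' where e': "e' \<in> open_edge_nbhd E e" "\<forall>e''\<in>closed_edge_nbhd E e - {e'}. c e'' \<noteq> c e'"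
    unfolding satisfied_def by blast
  have "open_edge_nbhd E e - {e'} \<subseteq> closed_edge_nbhd E e - {e'}" unfolding open_edge_nbhd_def by blast
  then show "\<exists>e'\<in>open_edge_nbhd E e. \<forall>e''\<in>open_edge_nbhd E e - {e'}. c e'' \<noteq> c e'"
    using e' by blast
qed

theorem mainTheorem11:
  fixes V :: "'a set" and E :: "'a set set"
  assumes "graph V E" and "V \<noteq> {}"
  shows "chi_ocf E \<le> chi_cf E
    \<and> real (chi_cf E) \<le> 3 * of_int \<lceil>log 2 (real (chromatic_number V E))\<rceil> + 17
    \<and> 3 * of_int \<lceil>log 2 (real (chromatic_number V E))\<rceil> + 17
        < 3 * log 2 (real (chromatic_number V E)) + (20::real)"
proof -
  let ?K = "chromatic_number V E"
  obtain f where f1: "\<forall>v\<in>V. f v < ?K" and f2: "\<forall>u v. {u, v} \<in> E \<longrightarrow> f u \<noteq> f v"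
    and f3: "\<forall>v\<in>V. \<forall>h < f v. \<exists>w. {v, w} \<in> E \<and> f w = h"
    using grundy_exists[OF assms] by blast
  obtain v0 where "v0 \<in> V" using assms(2) by blast
  then have K1: "1 \<le> ?K" using f1 by fastforce
  define x where "x = log 2 (real ?K)"
  have Kpos: "0 < real ?K" using K1 by simp
  have x0: "0 \<le> x" unfolding x_def using K1 by simp
  define M where "M = nat \<lceil>x\<rceil>"
  have cM: "real M = of_int \<lceil>x\<rceil>" unfolding M_def using x0 by simp
  have "real ?K = 2 powr x" unfolding x_def using Kpos by simp
  also have "\<dots> \<le> 2 powr (real M)" using cM by (intro powr_mono) simp_all
  also have "\<dots> = 2 ^ M" by (simp add: powr_realpow)
  finally have "real ?K \<le> real ((2::nat) ^ M)" by simp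
  then have KM: "?K \<le> 2 ^ M" by (simp only: of_nat_le_iff)
  interpret C: CFC V E f ?K M
    using assms(1) f1 f2 f3 KM by unfold_locales auto
  have cf: "conflict_free E C.col" by (rule C.conflict_free_col)
  have bd: "\<forall>e\<in>E. C.col e < 8 + 3 * M" using C.col_bound by blast
  have chi: "chi_cf E \<le> 8 + 3 * M" unfolding chi_cf_def
    by (rule Least_le) (use cf bd in blast)
  have "\<exists>(k::nat) c. (\<forall>e\<in>E. c e < k) \<and> conflict_free E c" using cf bd by blast
  then have "\<exists>c. (\<forall>e\<in>E. c e < chi_cf E) \<and> conflict_free E c" unfolding chi_cf_def by (rule LeastI_ex)
  then obtain c0 where c0: "\<forall>e\<in>E. c0 e < chi_cf E" "conflict_free E c0" by blast
  have ocf: "chi_ocf E \<le> chi_cf E" unfolding chi_ocf_def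
    by (rule Least_le) (use c0 cf_ocf in blast)
  have "real (chi_cf E) \<le> real (8 + 3 * M)" using chi by (simp only: of_nat_le_iff)
  then have p2: "real (chi_cf E) \<le> 3 * of_int \<lceil>x\<rceil> + 17" using cM by simp
  have p3: "3 * of_int \<lceil>x\<rceil> + 17 < 3 * x + (20::real)" using ceiling_correct[of x] by linarith
  show ?thesis using ocf p2 p3 unfolding x_def by simp
qed

end
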